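(* Let $G_s$ be a causal graph over a set of variables $V$ (with treatment $X$ and outcome $Y$) augmented with a selection node $S$, and let $T(G_s)$ be its twin network (defined in the context). Suppose there exists a subset $Z\subseteq V$ that is measured both in the biased (selected, $S=1$) experiment and at the population level (so that $P(Z)$ is available), and that $Y^*_{X^*}\perp\!\!\!\perp S \mid Z$ (d-separation in $T(G_s)$). Then the experimental distribution is s-recoverable and $$P(Y^*_{X^*}) = \sum_{z} P(Y^*_{X^*}\mid Z=z, S=1)\,P(Z=z).$$
   Context: Selection-augmented graph: $G_s$ is a causal DAG over variables $V$ together with an additional binary node $S$ ($S=1$ means included in the sample), with directed edges into $S$ from the variables influencing sample inclusion; each endogenous node $V_i$ (including $S$) has its own exogenous variable $U_{V_i}$. Twin network $T(G_s)$: take $G_s$ with its exogenous variables, add a counterfactual copy $V_i^*$ of each endogenous node (including $S^*$) with the same edges among the copies, let each $V_i^*$ share the exogenous parent $U_{V_i}$ of $V_i$, and remove all edges entering the counterfactual treatment node $X^*$ (intervention $do(X^*=x)$). $Y^*_{X^*}$ is the counterfactual outcome node, with $P(Y^*_{X^*=x}=y)=P(Y=y\mid do(X=x))$ the experimental distribution; $P(Y^*_{X^*}\mid \cdot, S=1)$ is the experimental distribution in the selected subpopulation. Conditional independences involving $Y^*_{X^*}$ and $S$ are d-separation statements in $T(G_s)$. s-recoverability means $P(Y^*_{X^*})$ is uniquely determined (for all distributions compatible with $G_s$) by the biased experimental distribution given $S=1$ and the available unbiased population distribution. *)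

theory Defs
  imports "HOL-Probability.Probability"
begin

definition is_path :: "('n \<times> 'n) set \<Rightarrow> 'n list \<Rightarrow> bool" where
  "is_path E ps \<longleftrightarrow> ps \<noteq> [] \<and> distinct ps \<and>
     (\<forall>i. Suc i < length ps \<longrightarrow> (ps ! i, ps ! Suc i) \<in> E \<or> (ps ! Suc i, ps ! i) \<in> E)"

definition collider_at :: "('n \<times> 'n) set \<Rightarrow> 'n list \<Rightarrow> nat \<Rightarrow> bool" where
  "collider_at E ps i \<longleftrightarrow> 0 < i \<and> Suc i < length ps \<and>
     (ps ! (i - 1), ps ! i) \<in> E \<and> (ps ! Suc i, ps ! i) \<in> E"

definition active_path :: "('n \<times> 'n) set \<Rightarrow> 'n set \<Rightarrow> 'n list \<Rightarrow> bool" where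
  "active_path E C ps \<longleftrightarrow> is_path E ps \<and>
     (\<forall>i. 0 < i \<and> Suc i < length ps \<longrightarrow>
        (if collider_at E ps i then (\<exists>d. (ps ! i, d) \<in> E\<^sup>* \<and> d \<in> C) else ps ! i \<notin> C))"

definition d_separated :: "('n \<times> 'n) set \<Rightarrow> 'n set \<Rightarrow> 'n set \<Rightarrow> 'n set \<Rightarrow> bool" where
  "d_separated E A B C \<longleftrightarrow> \<not> (\<exists>ps. active_path E C ps \<and> hd ps \<in> A \<and> last ps \<in> B)"

text \<open>Nodes of the twin network: factual copy, counterfactual copy, and the
  (shared) exogenous parent of each endogenous node.\<close>
datatype 'v tnode = Fact 'v | Cf 'v | Ex 'v

definition twin_edges :: "'v set \<Rightarrow> ('v \<times> 'v) set \<Rightarrow> 'v \<Rightarrow> ('v tnode \<times> 'v tnode) set" where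
  "twin_edges N E X =
     {(Ex v, Fact v) | v. v \<in> N} \<union> {(Ex v, Cf v) | v. v \<in> N \<and> v \<noteq> X} \<union>
     {(Fact a, Fact b) | a b. (a, b) \<in> E} \<union> {(Cf a, Cf b) | a b. (a, b) \<in> E \<and> b \<noteq> X}"

text \<open>Structural equations f v (values of endogenous variables) (value of U_v);
  compatibility: f v depends only on the parents of v.\<close>
definition compatible ::
  "'v set \<Rightarrow> ('v \<times> 'v) set \<Rightarrow> ('v \<Rightarrow> ('v \<Rightarrow> 'a) \<Rightarrow> 'u \<Rightarrow> 'a) \<Rightarrow> bool" where
  "compatible N E f \<longleftrightarrow> (\<forall>v\<in>N. \<forall>w w' uu. (\<forall>p. (p, v) \<in> E \<longrightarrow> w p = w' p) \<longrightarrow> f v w uu = f v w' uu)"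

text \<open>The (unique, by acyclicity) solution of the structural equations for exogenous values u.\<close>
definition solution :: "'v set \<Rightarrow> ('v \<Rightarrow> ('v \<Rightarrow> 'a) \<Rightarrow> 'u \<Rightarrow> 'a) \<Rightarrow> ('v \<Rightarrow> 'u) \<Rightarrow> ('v \<Rightarrow> 'a)" where
  "solution N f u = (THE w. w \<in> extensional N \<and> (\<forall>v\<in>N. w v = f v w (u v)))"

definition do_eq :: "'v \<Rightarrow> 'a \<Rightarrow> ('v \<Rightarrow> ('v \<Rightarrow> 'a) \<Rightarrow> 'u \<Rightarrow> 'a) \<Rightarrow> ('v \<Rightarrow> ('v \<Rightarrow> 'a) \<Rightarrow> 'u \<Rightarrow> 'a)" where
  "do_eq X x f = (\<lambda>v w uu. if v = X then x else f v w uu)"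

definition exo_dist :: "'v set \<Rightarrow> ('v \<Rightarrow> 'u pmf) \<Rightarrow> ('v \<Rightarrow> 'u) pmf" where
  "exo_dist N Pu = Pi_pmf N undefined Pu"

text \<open>Joint distribution of (factual world, counterfactual world under do(X*=x))
  in the twin network: both worlds share the exogenous variables.\<close>
definition twin_dist ::
  "'v set \<Rightarrow> ('v \<Rightarrow> 'u pmf) \<Rightarrow> ('v \<Rightarrow> ('v \<Rightarrow> 'a) \<Rightarrow> 'u \<Rightarrow> 'a) \<Rightarrow> 'v \<Rightarrow> 'a \<Rightarrow> (('v \<Rightarrow> 'a) \<times> ('v \<Rightarrow> 'a)) pmf" where
  "twin_dist N Pu f X x = map_pmf (\<lambda>u. (solution N f u, solution N (do_eq X x f) u)) (exo_dist N Pu)"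

definition obs_dist :: "'v set \<Rightarrow> ('v \<Rightarrow> 'u pmf) \<Rightarrow> ('v \<Rightarrow> ('v \<Rightarrow> 'a) \<Rightarrow> 'u \<Rightarrow> 'a) \<Rightarrow> ('v \<Rightarrow> 'a) pmf" where
  "obs_dist N Pu f = map_pmf (solution N f) (exo_dist N Pu)"

definition P_exp where
  "P_exp N Pu f X Y x y = measure_pmf.prob (twin_dist N Pu f X x) {p. snd p Y = y}"

definition P_Z where
  "P_Z N Pu f Z z = measure_pmf.prob (obs_dist N Pu f) {w. \<forall>v\<in>Z. w v = z v}"

definition P_ZS where
  "P_ZS N Pu f Z S s1 z = measure_pmf.prob (obs_dist N Pu f) {w. (\<forall>v\<in>Z. w v = z v) \<and> w S = s1}"

definition P_exp_cond_ZS where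
  "P_exp_cond_ZS N Pu f X Y Z S s1 x y z =
     measure_pmf.prob (twin_dist N Pu f X x) {p. snd p Y = y \<and> (\<forall>v\<in>Z. fst p v = z v) \<and> fst p S = s1}
     / measure_pmf.prob (twin_dist N Pu f X x) {p. (\<forall>v\<in>Z. fst p v = z v) \<and> fst p S = s1}"

definition P_biased where
  "P_biased N Pu f X Y Z S s1 x y z =
     measure_pmf.prob (twin_dist N Pu f X x) {p. snd p Y = y \<and> (\<forall>v\<in>Z. fst p v = z v) \<and> fst p S = s1}
     / measure_pmf.prob (twin_dist N Pu f X x) {p. fst p S = s1}"

definition positive where
  "positive N Pu f Z S s1 \<longleftrightarrow> (\<forall>z. P_Z N Pu f Z z > 0 \<longrightarrow> P_ZS N Pu f Z S s1 z > 0)"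

definition admissible where
  "admissible N E Z S s1 Pu f \<longleftrightarrow> compatible N E f \<and> positive N Pu f Z S s1"

text \<open>The itself-argument fixes the type of exogenous values.\<close>
definition s_recoverable ::
  "'u itself \<Rightarrow> 'v set \<Rightarrow> ('v \<times> 'v) set \<Rightarrow> 'v \<Rightarrow> 'v \<Rightarrow> 'v set \<Rightarrow> 'v \<Rightarrow> 'a \<Rightarrow> bool" where
  "s_recoverable uty N E X Y Z S s1 \<longleftrightarrow>
     (\<forall>(Pu1 :: 'v \<Rightarrow> 'u pmf) f1 (Pu2 :: 'v \<Rightarrow> 'u pmf) f2.
        admissible N E Z S s1 Pu1 f1 \<and> admissible N E Z S s1 Pu2 f2 \<and>
        (\<forall>x y z. P_biased N Pu1 f1 X Y Z S s1 x y z = P_biased N Pu2 f2 X Y Z S s1 x y z) \<and>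
        (\<forall>z. P_Z N Pu1 f1 Z z = P_Z N Pu2 f2 Z z)
        \<longrightarrow> (\<forall>x y. P_exp N Pu1 f1 X Y x y = P_exp N Pu2 f2 X Y x y))"

end

theory Submission
  imports Defs
begin


definition adj :: "('n \<times> 'n) set \<Rightarrow> 'n \<Rightarrow> 'n \<Rightarrow> bool" where
  "adj T a b \<longleftrightarrow> (a, b) \<in> T \<or> (b, a) \<in> T"
definition anc_in :: "('n \<times> 'n) set \<Rightarrow> 'n set \<Rightarrow> 'n \<Rightarrow> bool" where
  "anc_in T C x \<longleftrightarrow> (\<exists>d. (x, d) \<in> T\<^sup>* \<and> d \<in> C)"
definition wcond :: "('n \<times> 'n) set \<Rightarrow> 'n set \<Rightarrow> 'n \<Rightarrow> 'n \<Rightarrow> 'n \<Rightarrow> bool" where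
  "wcond T C a b c \<longleftrightarrow> (if (a, b) \<in> T \<and> (c, b) \<in> T then anc_in T C b else b \<notin> C)"

fun walk_ok :: "('n \<times> 'n) set \<Rightarrow> 'n set \<Rightarrow> 'n list \<Rightarrow> bool" where
  "walk_ok T C [] = False"
| "walk_ok T C [a] = True"
| "walk_ok T C [a, b] = adj T a b"
| "walk_ok T C (a # b # c # rest) = (adj T a b \<and> wcond T C a b c \<and> walk_ok T C (b # c # rest))"

lemma walk_ok_cons2:
  "walk_ok T C (a # b # rest) \<longleftrightarrow> adj T a b \<and> (rest \<noteq> [] \<longrightarrow> wcond T C a b (hd rest)) \<and> walk_ok T C (b # rest)"
  by (cases rest) auto

lemma walk_ok_split:
  "walk_ok T C (xs @ x # zs) \<longleftrightarrow> walk_ok T C (xs @ [x]) \<and> walk_ok T C (x # zs) \<and>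
     (xs \<noteq> [] \<and> zs \<noteq> [] \<longrightarrow> wcond T C (last xs) x (hd zs))"
proof (induction xs)
  case Nil
  then show ?case by simp
next
  case (Cons a xs)
  show ?case
  proof (cases xs)
    case Nil
    then show ?thesis by (cases zs) auto
  next
    case (Cons b xs')
    have e1: "walk_ok T C (a # xs @ x # zs) \<longleftrightarrow> adj T a b \<and> wcond T C a b (hd (xs' @ x # zs)) \<and> walk_ok T C (xs @ x # zs)"
      using Cons walk_ok_cons2[of T C a b "xs' @ x # zs"] by simp
    have e2: "walk_ok T C ((a # xs) @ [x]) \<longleftrightarrow> adj T a b \<and> wcond T C a b (hd (xs' @ [x])) \<and> walk_ok T C (xs @ [x])"
      using Cons walk_ok_cons2[of T C a b "xs' @ [x]"] by simp
    have e3: "hd (xs' @ x # zs) = hd (xs' @ [x])" by (cases xs') auto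
    show ?thesis using e1 e2 e3 Cons.IH Cons by auto
  qed
qed

lemma walk_ok_index:
  "walk_ok T C ps \<Longrightarrow> ps \<noteq> [] \<and> (\<forall>i. Suc i < length ps \<longrightarrow> adj T (ps ! i) (ps ! Suc i)) \<and>
     (\<forall>i. 0 < i \<and> Suc i < length ps \<longrightarrow> wcond T C (ps ! (i - 1)) (ps ! i) (ps ! Suc i))"
proof (induction T C ps rule: walk_ok.induct)
  case (4 T C a b c rest)
  then have IH: "\<forall>i. Suc i < length (b # c # rest) \<longrightarrow> adj T ((b # c # rest) ! i) ((b # c # rest) ! Suc i)"
     "\<forall>i. 0 < i \<and> Suc i < length (b # c # rest) \<longrightarrow> wcond T C ((b # c # rest) ! (i - 1)) ((b # c # rest) ! i) ((b # c # rest) ! Suc i)"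
     and h: "adj T a b" "wcond T C a b c" by auto
  have A: "adj T ((a # b # c # rest) ! i) ((a # b # c # rest) ! Suc i)" if "Suc i < length (a # b # c # rest)" for i
  proof (cases i)
    case 0 then show ?thesis using h by simp
  next
    case (Suc j) then show ?thesis using IH(1)[rule_format, of j] that by simp
  qed
  have B: "wcond T C ((a # b # c # rest) ! (i - 1)) ((a # b # c # rest) ! i) ((a # b # c # rest) ! Suc i)"
    if "0 < i" "Suc i < length (a # b # c # rest)" for i
  proof (cases i)
    case 0 then show ?thesis using that by simp
  next
    case (Suc j)
    show ?thesis
    proof (cases j)
      case 0 then show ?thesis using h Suc by simp
    next
      case (Suc k)
      then show ?thesis using IH(2)[rule_format, of j] that \<open>i = Suc j\<close> by simp
    qed
  qed
  show ?case using A B by blast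
qed (auto simp: less_Suc_eq nth_Cons split: nat.splits)

lemma walk_ok_fwd:
  "walk_ok T C (a # b # rest) \<Longrightarrow> (a, b) \<in> T \<Longrightarrow> (a, last (b # rest)) \<in> T\<^sup>+ \<or> anc_in T C a"
proof (induction rest arbitrary: a b)
  case Nil
  then show ?case by auto
next
  case (Cons c rest)
  have w: "adj T a b" "wcond T C a b c" "walk_ok T C (b # c # rest)" using Cons.prems by auto
  show ?case
  proof (cases "(c, b) \<in> T")
    case True
    then have "anc_in T C b" using w(2) Cons.prems(2) by (simp add: wcond_def)
    then have "anc_in T C a" using Cons.prems(2) unfolding anc_in_def
      by (meson converse_rtrancl_into_rtrancl)
    then show ?thesis by simp
  next
    case False
    then have "(b, c) \<in> T" using w(3) walk_ok_cons2[of T C b c rest] by (auto simp: adj_def)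
    from Cons.IH[OF w(3) this] show ?thesis
      using Cons.prems(2) unfolding anc_in_def
      by (metis converse_rtrancl_into_rtrancl last_ConsR list.distinct(1) trancl_into_trancl2)
  qed
qed


lemma walk_ok_last2: "walk_ok T C (ps @ [a, b]) \<Longrightarrow> adj T a b"
  using walk_ok_split[of T C ps a "[b]"] by simp

lemma acyc_irrefl: "acyclic T \<Longrightarrow> (a, a) \<notin> T"
  by (auto simp: acyclic_def)

lemma acyc_asym: "acyclic T \<Longrightarrow> (a, b) \<in> T \<Longrightarrow> (b, a) \<notin> T"
  by (meson acyclic_def trancl.r_into_trancl trancl_into_trancl2)

lemma walk_shortcut:
  assumes ac: "acyclic T" and w: "walk_ok T C (xs @ x # ys @ x # zs)"
  shows "walk_ok T C (xs @ x # zs)"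
proof -
  from w have w1: "walk_ok T C (xs @ [x])" and w2: "walk_ok T C (x # ys @ x # zs)"
    and J1: "xs \<noteq> [] \<longrightarrow> wcond T C (last xs) x (hd (ys @ x # zs))"
    using walk_ok_split[of T C xs x "ys @ x # zs"] by auto
  from w2 have w3: "walk_ok T C ((x # ys) @ [x])" and w4: "walk_ok T C (x # zs)"
    and J2: "zs \<noteq> [] \<longrightarrow> wcond T C (last (x # ys)) x (hd zs)"
    using walk_ok_split[of T C "x # ys" x zs] by auto
  have ysne: "ys \<noteq> []"
  proof
    assume "ys = []"
    then have "adj T x x" using w2 walk_ok_cons2[of T C x x zs] by simp
    then show False using acyc_irrefl[OF ac] by (auto simp: adj_def)
  qed
  then obtain y1 ys' where ys: "ys = y1 # ys'" by (cases ys) auto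
  have "wcond T C (last xs) x (hd zs)" if xsne: "xs \<noteq> []" and zsne: "zs \<noteq> []"
  proof -
    define p where "p = last xs"
    define q where "q = hd zs"
    define yk where "yk = last ys"
    have c1: "wcond T C p x y1" using J1 xsne ys by (simp add: p_def)
    have c2: "wcond T C yk x q" using J2 zsne ysne by (simp add: yk_def q_def)
    have fw: "(x, y1) \<in> T \<Longrightarrow> anc_in T C x"
    proof -
      assume "(x, y1) \<in> T"
      from walk_ok_fwd[of T C x y1 "ys' @ [x]"] w3 ys this
      have "(x, x) \<in> T\<^sup>+ \<or> anc_in T C x" by simp
      then show ?thesis using ac by (auto simp: acyclic_def)
    qed
    have ad1: "adj T x y1" using w2 ys walk_ok_cons2[of T C x y1] by auto
    show ?thesis
    proof (cases "(p, x) \<in> T \<and> (q, x) \<in> T")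
      case True
      have "anc_in T C x"
      proof (cases "(y1, x) \<in> T")
        case True
        then show ?thesis using c1 \<open>(p, x) \<in> T \<and> (q, x) \<in> T\<close> by (simp add: wcond_def)
      next
        case False
        then show ?thesis using fw ad1 by (auto simp: adj_def)
      qed
      then show ?thesis using True by (simp add: wcond_def p_def q_def)
    next
      case False
      have "x \<notin> C"
      proof
        assume xC: "x \<in> C"
        have "x \<in> C \<Longrightarrow> \<not> anc_in T C x \<Longrightarrow> False" by (auto simp: anc_in_def)
        from c1 xC have "(p, x) \<in> T" by (auto simp: wcond_def split: if_splits)
        moreover from c2 xC have "(q, x) \<in> T" by (auto simp: wcond_def split: if_splits)
        ultimately show False using False by simp
      qed
      then show ?thesis using False unfolding wcond_def p_def q_def by auto
    qed
  qed
  then show ?thesis using w1 w4 walk_ok_split[of T C xs x zs] by blast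
qed

lemma walk_to_path:
  assumes ac: "acyclic T"
  shows "walk_ok T C ps \<Longrightarrow> \<exists>ps'. active_path T C ps' \<and> hd ps' = hd ps \<and> last ps' = last ps"
proof (induction "length ps" arbitrary: ps rule: less_induct)
  case less
  show ?case
  proof (cases "distinct ps")
    case True
    have "active_path T C ps"
      using walk_ok_index[OF less.prems] True
      unfolding active_path_def is_path_def collider_at_def wcond_def adj_def anc_in_def
      by auto
    then show ?thesis by blast
  next
    case False
    then obtain xs ys zs y where ps: "ps = xs @ [y] @ ys @ [y] @ zs"
      using not_distinct_decomp by blast
    have w': "walk_ok T C (xs @ y # zs)" using walk_shortcut[OF ac] less.prems ps by simp
    have "length (xs @ y # zs) < length ps" using ps by simp
    from less.hyps[OF this w'] obtain ps' where "active_path T C ps'"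
      "hd ps' = hd (xs @ y # zs)" "last ps' = last (xs @ y # zs)" by blast
    moreover have "hd (xs @ y # zs) = hd ps" using ps by (cases xs) auto
    moreover have "last (xs @ y # zs) = last ps" using ps by (cases zs) auto
    ultimately show ?thesis by metis
  qed
qed



lemma sol_unique_aux:
  assumes wf: "wf E" and EN: "E \<subseteq> N \<times> N" and cp: "compatible N E g"
    and s: "\<forall>v\<in>N. s v = g v s (u v)" and s': "\<forall>v\<in>N. s' v = g v s' (u v)"
  shows "v \<in> N \<Longrightarrow> s v = s' v"
proof (induction v rule: wf_induct_rule[OF wf])
  case (1 v)
  have "\<forall>p. (p, v) \<in> E \<longrightarrow> s p = s' p" using 1 EN by blast
  then have "g v s (u v) = g v s' (u v)" using cp 1(2) unfolding compatible_def by blast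
  then show ?case using s s' 1(2) by simp
qed

lemma sol_exists:
  assumes wf: "wf E" and EN: "E \<subseteq> N \<times> N" and cp: "compatible N E g"
  shows "\<exists>s. \<forall>v\<in>N. s v = g v s (u v)"
proof -
  define s0 where "s0 = wfrec E (\<lambda>rec v. g v rec (u v))"
  have "\<forall>v\<in>N. s0 v = g v s0 (u v)"
  proof
    fix v assume v: "v \<in> N"
    have "s0 v = g v (cut s0 E v) (u v)" unfolding s0_def by (subst wfrec[OF wf]) simp
    also have "\<dots> = g v s0 (u v)" using cp v unfolding compatible_def cut_def by (intro cp[unfolded compatible_def, rule_format, OF v]) simp
    finally show "s0 v = g v s0 (u v)" .
  qed
  then show ?thesis by blast
qed

lemma solution_props:
  assumes wf: "wf E" and EN: "E \<subseteq> N \<times> N" and cp: "compatible N E g"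
  shows "\<forall>v\<in>N. solution N g u v = g v (solution N g u) (u v)"
    and "\<forall>v\<in>N. s v = g v s (u v) \<Longrightarrow> v \<in> N \<Longrightarrow> s v = solution N g u v"
proof -
  obtain s0 where s0: "\<forall>v\<in>N. s0 v = g v s0 (u v)" using sol_exists[OF wf EN cp] by blast
  define w0 where "w0 = restrict s0 N"
  have gw: "g v w0 (u v) = g v s0 (u v)" if "v \<in> N" for v
    using cp that EN unfolding compatible_def w0_def by (intro cp[unfolded compatible_def, rule_format, OF that]) auto
  have P0: "w0 \<in> extensional N \<and> (\<forall>v\<in>N. w0 v = g v w0 (u v))"
    using s0 gw by (auto simp: w0_def)
  have uq: "w = w0" if "w \<in> extensional N \<and> (\<forall>v\<in>N. w v = g v w (u v))" for w
  proof
    fix v show "w v = w0 v"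
      using sol_unique_aux[OF wf EN cp, of w u w0 v] that P0
      by (cases "v \<in> N") (auto simp: extensional_def)
  qed
  have eq: "solution N g u = w0" unfolding solution_def
    by (rule the_equality) (use P0 uq in blast)+
  show "\<forall>v\<in>N. solution N g u v = g v (solution N g u) (u v)" using P0 eq by simp
  show "s v = solution N g u v" if "\<forall>v\<in>N. s v = g v s (u v)" "v \<in> N"
    using sol_unique_aux[OF wf EN cp, of s u w0 v] that P0 eq by simp
qed

lemma compatible_do: "compatible N E f \<Longrightarrow> compatible N E (do_eq X x f)"
  unfolding compatible_def do_eq_def by auto

lemma compatible_gw: "compatible N E f \<Longrightarrow> compatible N E (\<lambda>v s uu. f v (\<lambda>p. if p \<in> Z then w p else s p) uu)"
  unfolding compatible_def by auto

lemma prob_pair_rect: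
  "measure_pmf.prob (pair_pmf M M') (A \<times> B) = measure_pmf.prob M A * measure_pmf.prob M' B"
proof -
  have "measure_pmf.prob (pair_pmf M M') (A \<times> B) = measure_pmf.prob (pair_pmf M M') ((A \<times> B) \<inter> set_pmf (pair_pmf M M'))"
    by (rule measure_Int_set_pmf[symmetric])
  also have "(A \<times> B) \<inter> set_pmf (pair_pmf M M') = (A \<inter> set_pmf M) \<times> (B \<inter> set_pmf M')" by auto
  also have "measure_pmf.prob (pair_pmf M M') \<dots> = measure_pmf.prob M (A \<inter> set_pmf M) * measure_pmf.prob M' (B \<inter> set_pmf M')"
    by (rule measure_pmf_prob_product) auto
  finally show ?thesis by (simp add: measure_Int_set_pmf)
qed

lemma indep_Pi:
  assumes fin: "finite N" and KN: "K \<subseteq> N"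
    and dA: "\<And>u u'. (\<forall>v\<in>K. u v = u' v) \<Longrightarrow> A u = A u'"
    and dB: "\<And>u u'. (\<forall>v. v \<notin> K \<longrightarrow> u v = u' v) \<Longrightarrow> B u = B u'"
  shows "measure_pmf.prob (Pi_pmf N d P) {u. A u \<and> B u} =
         measure_pmf.prob (Pi_pmf K d P) {u. A u} * measure_pmf.prob (Pi_pmf (N - K) d P) {u. B u}"
proof -
  have NK: "N = K \<union> (N - K)" using KN by blast
  have fK: "finite K" using fin KN finite_subset by blast
  have "Pi_pmf N d P = Pi_pmf (K \<union> (N - K)) d P" using NK by simp
  also have "\<dots> = map_pmf (\<lambda>(f,g) x. if x \<in> K then f x else g x) (pair_pmf (Pi_pmf K d P) (Pi_pmf (N - K) d P))"
    using fin fK by (intro Pi_pmf_union) auto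
  finally have eq: "Pi_pmf N d P = \<dots>" .
  have pre: "(\<lambda>(f,g) x. if x \<in> K then f x else g x) -` {u. A u \<and> B u} = {u. A u} \<times> {u. B u}"
  proof (intro set_eqI, clarify)
    fix f g
    have "A (\<lambda>x. if x \<in> K then f x else g x) = A f" by (rule dA) auto
    moreover have "B (\<lambda>x. if x \<in> K then f x else g x) = B g" by (rule dB) auto
    ultimately show "((f, g) \<in> (\<lambda>(f,g) x. if x \<in> K then f x else g x) -` {u. A u \<and> B u}) = ((f, g) \<in> {u. A u} \<times> {u. B u})"
      by simp
  qed
  show ?thesis unfolding eq by (simp only: measure_map_pmf pre prob_pair_rect)
qed

lemma prob_partition:
  assumes "finite I" and "\<And>p. Q p \<Longrightarrow> g p \<in> I"
  shows "measure_pmf.prob M {p. Q p} = (\<Sum>i\<in>I. measure_pmf.prob M {p. Q p \<and> g p = i})"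
proof -
  have "{p. Q p} = (\<Union>i\<in>I. {p. Q p \<and> g p = i})" using assms(2) by auto
  then have "measure_pmf.prob M {p. Q p} = measure_pmf.prob M (\<Union>i\<in>I. {p. Q p \<and> g p = i})" by simp
  also have "\<dots> = (\<Sum>i\<in>I. measure_pmf.prob M {p. Q p \<and> g p = i})"
    by (rule measure_pmf.finite_measure_finite_Union) (auto simp: assms disjoint_family_on_def)
  finally show ?thesis .
qed



lemma twin_trancl:
  assumes "(a, b) \<in> (twin_edges N E X)\<^sup>+"
  shows "(\<exists>v w. a = Fact v \<and> b = Fact w \<and> (v, w) \<in> E\<^sup>+) \<or> (\<exists>v w. a = Cf v \<and> b = Cf w \<and> (v, w) \<in> E\<^sup>+)
         \<or> (\<exists>v. a = Ex v \<and> (\<forall>w. b \<noteq> Ex w))"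
  using assms
proof (induction rule: trancl_induct)
  case (base y)
  then show ?case by (auto simp: twin_edges_def)
next
  case (step y z)
  from step.hyps(2) step.IH show ?case
    by (auto simp: twin_edges_def)
qed

lemma twin_acyclic: "acyclic E \<Longrightarrow> acyclic (twin_edges N E X)"
  unfolding acyclic_def
proof (intro allI notI)
  fix a assume ac: "\<forall>x. (x, x) \<notin> E\<^sup>+" and aa: "(a, a) \<in> (twin_edges N E X)\<^sup>+"
  from twin_trancl[OF aa] ac show False by auto
qed

locale setting =
  fixes N :: "'v set" and E :: "('v \<times> 'v) set" and X Y S :: 'v and Z :: "'v set"
  assumes finN: "finite N" and EN: "E \<subseteq> N \<times> N" and acyc: "acyclic E"
    and XN: "X \<in> N" and YN: "Y \<in> N" and SN: "S \<in> N" and YS: "Y \<noteq> S"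
    and ZN: "Z \<subseteq> N - {S}"
    and dsep: "d_separated (twin_edges N E X) {Cf Y} {Fact S} (Fact ` Z)"
begin

definition "T = twin_edges N E X"
definition "C = Fact ` Z"
definition "E' = {(a, b). (a, b) \<in> E \<and> b \<noteq> X}"
definition "EZ = {(a, b). (a, b) \<in> E \<and> a \<notin> Z}"
definition "K0 = {v. v \<noteq> X \<and> (v, Y) \<in> E'\<^sup>*}"
definition "cutanc v = {a. (a, v) \<in> EZ\<^sup>*}"
definition "R = {(a, b). \<exists>z\<in>Z. a \<in> cutanc z \<and> b \<in> cutanc z}"
definition "K = {b. \<exists>a\<in>K0. (a, b) \<in> R\<^sup>*}"

lemma acT: "acyclic T" unfolding T_def using twin_acyclic[OF acyc] .

lemma asT: "(a, b) \<in> T \<Longrightarrow> (b, a) \<notin> T" using acyc_asym[OF acT] .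

definition "walkto t ps \<longleftrightarrow> walk_ok T C (ps @ [t]) \<and> hd (ps @ [t]) = Cf Y"
definition "CfInv c \<longleftrightarrow> (\<exists>ps. walkto (Cf c) ps \<and> (ps \<noteq> [] \<longrightarrow> (Cf c, last ps) \<in> T))"
definition "Inv a \<longleftrightarrow> (\<exists>ps. walkto (Fact a) ps \<and> ps \<noteq> [] \<and>
   ((last ps, Fact a) \<in> T \<or> ((Fact a, last ps) \<in> T \<and> a \<notin> Z)))"
definition "InvB a \<longleftrightarrow> (\<exists>ps. walkto (Fact a) ps \<and> ps \<noteq> [] \<and>
   ((last ps, Fact a) \<in> T \<and> a \<in> Z \<or> (Fact a, last ps) \<in> T \<and> a \<notin> Z))"

lemma extend:
  assumes "walkto x ps" "adj T x q" "ps \<noteq> [] \<Longrightarrow> wcond T C (last ps) x q"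
  shows "walkto q (ps @ [x])"
proof -
  have "walk_ok T C (ps @ x # [q])"
    using assms walk_ok_split[of T C ps x "[q]"] by (auto simp: walkto_def)
  moreover have "hd ((ps @ [x]) @ [q]) = hd (ps @ [x])" by (cases ps) auto
  ultimately show ?thesis using assms(1) by (simp add: walkto_def)
qed

lemma CfInv_Y: "CfInv Y"
  unfolding CfInv_def walkto_def by (rule exI[of _ "[]"]) simp

lemma CfInv_step: "CfInv c \<Longrightarrow> (p, c) \<in> E' \<Longrightarrow> CfInv p"
proof -
  assume "CfInv c" and pc: "(p, c) \<in> E'"
  then obtain ps where ps: "walkto (Cf c) ps" "ps \<noteq> [] \<longrightarrow> (Cf c, last ps) \<in> T"
    unfolding CfInv_def by blast
  have e: "(Cf p, Cf c) \<in> T" using pc by (auto simp: T_def twin_edges_def E'_def)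
  have "walkto (Cf p) (ps @ [Cf c])"
  proof (rule extend[OF ps(1)])
    show "adj T (Cf c) (Cf p)" using e by (simp add: adj_def)
    assume "ps \<noteq> []"
    then have "(Cf c, last ps) \<in> T" using ps(2) by simp
    then have "(last ps, Cf c) \<notin> T" using asT by blast
    then show "wcond T C (last ps) (Cf c) (Cf p)" by (auto simp: wcond_def C_def)
  qed
  then show "CfInv p" unfolding CfInv_def using e by (intro exI[of _ "ps @ [Cf c]"]) simp
qed

lemma CfInv_rt: "(v, Y) \<in> E'\<^sup>* \<Longrightarrow> CfInv v"
proof (induction rule: converse_rtrancl_induct)
  case base then show ?case by (rule CfInv_Y)
next
  case (step y z) then show ?case using CfInv_step by blast
qed

lemma Cf_to_Fact: "CfInv k \<Longrightarrow> k \<in> N \<Longrightarrow> k \<noteq> X \<Longrightarrow> Inv k"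
proof -
  assume "CfInv k" and kN: "k \<in> N" and kX: "k \<noteq> X"
  then obtain ps where ps: "walkto (Cf k) ps" "ps \<noteq> [] \<longrightarrow> (Cf k, last ps) \<in> T"
    unfolding CfInv_def by blast
  have e1: "(Ex k, Cf k) \<in> T" and e2: "(Ex k, Fact k) \<in> T" using kN kX by (auto simp: T_def twin_edges_def)
  have w1: "walkto (Ex k) (ps @ [Cf k])"
  proof (rule extend[OF ps(1)])
    show "adj T (Cf k) (Ex k)" using e1 by (simp add: adj_def)
    assume "ps \<noteq> []"
    then have "(last ps, Cf k) \<notin> T" using ps(2) asT by blast
    then show "wcond T C (last ps) (Cf k) (Ex k)" by (auto simp: wcond_def C_def)
  qed
  have w2: "walkto (Fact k) ((ps @ [Cf k]) @ [Ex k])"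
  proof (rule extend[OF w1])
    show "adj T (Ex k) (Fact k)" using e2 by (simp add: adj_def)
    have "(Cf k, Ex k) \<notin> T" by (auto simp: T_def twin_edges_def)
    then show "wcond T C (last (ps @ [Cf k])) (Ex k) (Fact k)" by (auto simp: wcond_def C_def)
  qed
  show "Inv k" unfolding Inv_def using w2 e2 by (intro exI[of _ "(ps @ [Cf k]) @ [Ex k]"]) simp
qed

lemma Inv_fwd: "Inv a \<Longrightarrow> (a, q) \<in> EZ \<Longrightarrow> Inv q"
proof -
  assume "Inv a" and aq: "(a, q) \<in> EZ"
  then obtain ps where ps: "walkto (Fact a) ps" "ps \<noteq> []" by (auto simp: Inv_def)
  have e: "(Fact a, Fact q) \<in> T" and aZ: "a \<notin> Z" using aq by (auto simp: T_def twin_edges_def EZ_def)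
  have "walkto (Fact q) (ps @ [Fact a])"
  proof (rule extend[OF ps(1)])
    show "adj T (Fact a) (Fact q)" using e by (simp add: adj_def)
    have "(Fact q, Fact a) \<notin> T" using e asT by blast
    then show "wcond T C (last ps) (Fact a) (Fact q)" using aZ by (auto simp: wcond_def C_def)
  qed
  then show "Inv q" unfolding Inv_def using e by (intro exI[of _ "ps @ [Fact a]"]) simp
qed

lemma InvB_back: "InvB b \<Longrightarrow> (p, b) \<in> EZ \<Longrightarrow> InvB p"
proof -
  assume "InvB b" and pb: "(p, b) \<in> EZ"
  then obtain ps where ps: "walkto (Fact b) ps" "ps \<noteq> []"
    and arr: "(last ps, Fact b) \<in> T \<and> b \<in> Z \<or> (Fact b, last ps) \<in> T \<and> b \<notin> Z" by (auto simp: InvB_def)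
  have e: "(Fact p, Fact b) \<in> T" and pZ: "p \<notin> Z" using pb by (auto simp: T_def twin_edges_def EZ_def)
  have "walkto (Fact p) (ps @ [Fact b])"
  proof (rule extend[OF ps(1)])
    show "adj T (Fact b) (Fact p)" using e by (simp add: adj_def)
    show "wcond T C (last ps) (Fact b) (Fact p)"
      using arr e asT[of "Fact b" "last ps"] by (auto simp: wcond_def C_def anc_in_def)
  qed
  then show "InvB p" unfolding InvB_def using e pZ by (intro exI[of _ "ps @ [Fact b]"]) simp
qed

lemma Inv_fwd_rt: "(a, b) \<in> EZ\<^sup>* \<Longrightarrow> Inv a \<Longrightarrow> Inv b"
  by (induction rule: rtrancl_induct) (auto intro: Inv_fwd)

lemma InvB_back_rt: "(p, b) \<in> EZ\<^sup>* \<Longrightarrow> InvB b \<Longrightarrow> InvB p"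
  by (induction rule: converse_rtrancl_induct) (auto intro: InvB_back)

lemma Inv_R: "Inv a \<Longrightarrow> (a, b) \<in> R \<Longrightarrow> Inv b"
proof -
  assume a: "Inv a" and "(a, b) \<in> R"
  then obtain z where z: "z \<in> Z" "(a, z) \<in> EZ\<^sup>*" "(b, z) \<in> EZ\<^sup>*" by (auto simp: R_def cutanc_def)
  have "Inv z" using Inv_fwd_rt[OF z(2) a] .
  then have "InvB z" using z(1) by (auto simp: Inv_def InvB_def)
  then have "InvB b" using InvB_back_rt[OF z(3)] by blast
  then show "Inv b" by (auto simp: Inv_def InvB_def)
qed

lemma K0N: "v \<in> K0 \<Longrightarrow> v \<in> N"
  unfolding K0_def using YN EN by (auto simp: E'_def elim: converse_rtranclE)

lemma Inv_K: "k \<in> K \<Longrightarrow> Inv k"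
proof -
  assume "k \<in> K"
  then obtain a where a: "a \<in> K0" "(a, k) \<in> R\<^sup>*" by (auto simp: K_def)
  have "Inv a" using Cf_to_Fact[OF CfInv_rt K0N[OF a(1)]] a(1) by (auto simp: K0_def)
  from a(2) this show "Inv k" by (induction rule: rtrancl_induct) (auto intro: Inv_R)
qed

lemma cutanc_S_K: "cutanc S \<inter> K = {}"
proof (rule ccontr)
  assume "cutanc S \<inter> K \<noteq> {}"
  then obtain v where v: "v \<in> K" "(v, S) \<in> EZ\<^sup>*" by (auto simp: cutanc_def)
  have "Inv S" using Inv_fwd_rt[OF v(2) Inv_K[OF v(1)]] .
  then obtain ps where "walkto (Fact S) ps" by (auto simp: Inv_def)
  then have w: "walk_ok T C (ps @ [Fact S])" and h: "hd (ps @ [Fact S]) = Cf Y" by (auto simp: walkto_def)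
  from walk_to_path[OF acT w] obtain ps' where "active_path T C ps'" "hd ps' = Cf Y" "last ps' = Fact S"
    using h by auto
  then show False using dsep by (auto simp: d_separated_def T_def C_def)
qed

end


context setting
begin

lemma wfE: "wf E"
proof -
  have "finite E" using EN finN by (meson finite_SigmaI finite_subset)
  then show ?thesis using acyc by (rule finite_acyclic_wf)
qed

lemma cutanc_N: "v \<in> N \<Longrightarrow> cutanc v \<subseteq> N"
  unfolding cutanc_def using EN by (auto simp: EZ_def elim: converse_rtranclE)

lemma self_cutanc: "v \<in> cutanc v" by (simp add: cutanc_def)

lemma K_N: "K \<subseteq> N"
proof
  fix b assume "b \<in> K"
  then obtain a where a: "a \<in> K0" "(a, b) \<in> R\<^sup>*" by (auto simp: K_def)
  from a(2) show "b \<in> N"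
  proof (cases rule: rtranclE)
    case base then show ?thesis using K0N a(1) by simp
  next
    case (step c)
    then obtain z where "z \<in> Z" "b \<in> cutanc z" by (auto simp: R_def)
    then show ?thesis using cutanc_N[of z] ZN by auto
  qed
qed

lemma K0_K: "K0 \<subseteq> K" by (auto simp: K_def)

lemma Z_split: "z \<in> Z \<Longrightarrow> cutanc z \<subseteq> K \<or> cutanc z \<inter> K = {}"
proof (rule ccontr)
  assume z: "z \<in> Z" and "\<not> (cutanc z \<subseteq> K \<or> cutanc z \<inter> K = {})"
  then obtain a b where ab: "a \<in> cutanc z" "a \<in> K" "b \<in> cutanc z" "b \<notin> K" by blast
  then obtain k where "k \<in> K0" "(k, a) \<in> R\<^sup>*" by (auto simp: K_def)
  moreover have "(a, b) \<in> R" using ab z by (auto simp: R_def)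
  ultimately have "(k, b) \<in> R\<^sup>*" "k \<in> K0" by (auto intro: rtrancl_into_rtrancl)
  then have "b \<in> K" unfolding K_def by blast
  then show False using ab by simp
qed

lemma cf_dep:
  assumes cp: "compatible N E f" and uu: "\<forall>v\<in>K0. u v = u' v"
  shows "solution N (do_eq X x f) u Y = solution N (do_eq X x f) u' Y"
proof -
  have cp': "compatible N E (do_eq X x f)" using compatible_do[OF cp] .
  note s1 = solution_props(1)[OF wfE EN cp', of u] and s2 = solution_props(1)[OF wfE EN cp', of u']
  have "v \<in> N \<longrightarrow> (v, Y) \<in> E'\<^sup>* \<longrightarrow> solution N (do_eq X x f) u v = solution N (do_eq X x f) u' v" for v
  proof (induction v rule: wf_induct_rule[OF wfE])
    case (1 v)
    show ?case
    proof (intro impI)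
      assume vN: "v \<in> N" and vY: "(v, Y) \<in> E'\<^sup>*"
      show "solution N (do_eq X x f) u v = solution N (do_eq X x f) u' v"
      proof (cases "v = X")
        case True
        have a: "solution N (do_eq X x f) u v = do_eq X x f v (solution N (do_eq X x f) u) (u v)" using s1 vN by blast
        have b: "solution N (do_eq X x f) u' v = do_eq X x f v (solution N (do_eq X x f) u') (u' v)" using s2 vN by blast
        show ?thesis unfolding a b using True by (simp add: do_eq_def)
      next
        case False
        have par: "solution N (do_eq X x f) u p = solution N (do_eq X x f) u' p" if "(p, v) \<in> E" for p
        proof -
          have "(p, v) \<in> E'" using that False by (simp add: E'_def)
          then have "(p, Y) \<in> E'\<^sup>*" using vY by (meson converse_rtrancl_into_rtrancl)
          moreover have "p \<in> N" using that EN by auto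
          ultimately show ?thesis using 1 that by blast
        qed
        have uv: "u v = u' v" using uu False vY by (simp add: K0_def)
        have a: "solution N (do_eq X x f) u v = do_eq X x f v (solution N (do_eq X x f) u) (u v)" using s1 vN by blast
        have b: "solution N (do_eq X x f) u' v = do_eq X x f v (solution N (do_eq X x f) u') (u' v)" using s2 vN by blast
        have "solution N (do_eq X x f) u v = f v (solution N (do_eq X x f) u) (u v)"
          unfolding a using False by (simp add: do_eq_def)
        also have "\<dots> = f v (solution N (do_eq X x f) u') (u' v)"
          using cp[unfolded compatible_def, rule_format, OF vN, of "solution N (do_eq X x f) u" "solution N (do_eq X x f) u'"] par uv by simp
        also have "\<dots> = solution N (do_eq X x f) u' v"
          unfolding b using False by (simp add: do_eq_def)
        finally show ?thesis .
      qed
    qed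
  qed
  then show ?thesis using YN by simp
qed

definition "gw f w = (\<lambda>v s uu. f v (\<lambda>p. if p \<in> Z then w p else s p) uu)"

lemma gw_app: "gw f w v s uu = f v (\<lambda>p. if p \<in> Z then w p else s p) uu"
  by (simp add: gw_def)

lemma cs_dep:
  assumes cp: "compatible N E f"
  shows "v \<in> N \<Longrightarrow> (\<forall>a\<in>cutanc v. u a = u' a) \<Longrightarrow> solution N (gw f w) u v = solution N (gw f w) u' v"
proof (induction v rule: wf_induct_rule[OF wfE])
  case (1 v)
  have cp': "compatible N E (gw f w)" unfolding gw_def using compatible_gw[OF cp] .
  have par: "(if p \<in> Z then w p else solution N (gw f w) u p) = (if p \<in> Z then w p else solution N (gw f w) u' p)"
    if pv: "(p, v) \<in> E" for p
  proof (cases "p \<in> Z")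
    case False
    then have "(p, v) \<in> EZ" using pv by (simp add: EZ_def)
    then have sub: "cutanc p \<subseteq> cutanc v" unfolding cutanc_def
      by (simp add: subset_iff rtrancl_into_rtrancl)
    have pN: "p \<in> N" using pv EN by auto
    have "\<forall>a\<in>cutanc p. u a = u' a" using sub 1(3) by blast
    then have "solution N (gw f w) u p = solution N (gw f w) u' p" using 1(1)[rule_format, OF pv pN] by blast
    then show ?thesis by simp
  qed simp
  have uv: "u v = u' v" using 1(3) self_cutanc[of v] by blast
  have "solution N (gw f w) u v = gw f w v (solution N (gw f w) u) (u v)"
    by (rule solution_props(1)[OF wfE EN cp', of u, rule_format, OF 1(2)])
  also have "\<dots> = f v (\<lambda>p. if p \<in> Z then w p else solution N (gw f w) u p) (u' v)" by (simp only: gw_app uv)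
  also have "\<dots> = f v (\<lambda>p. if p \<in> Z then w p else solution N (gw f w) u' p) (u' v)"
    by (rule cp[unfolded compatible_def, rule_format, OF 1(2)]) (use par in blast)
  also have "\<dots> = gw f w v (solution N (gw f w) u') (u' v)" by (simp only: gw_app)
  also have "\<dots> = solution N (gw f w) u' v"
    by (rule solution_props(1)[OF wfE EN cp', of u', rule_format, OF 1(2), symmetric])
  finally show ?case .
qed

lemma ev_equiv:
  assumes cp: "compatible N E f"
  shows "(\<forall>z\<in>Z. solution N f u z = w z) \<Longrightarrow> \<forall>v\<in>N. solution N f u v = solution N (gw f w) u v"
    and "(\<forall>z\<in>Z. solution N (gw f w) u z = w z) \<Longrightarrow> \<forall>v\<in>N. solution N (gw f w) u v = solution N f u v"
proof -
  have cp': "compatible N E (gw f w)" unfolding gw_def using compatible_gw[OF cp] .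
  note s1 = solution_props[OF wfE EN cp] and s2 = solution_props[OF wfE EN cp']
  show "\<forall>v\<in>N. solution N f u v = solution N (gw f w) u v" if h: "\<forall>z\<in>Z. solution N f u z = w z"
  proof
    fix v assume vN: "v \<in> N"
    have "\<forall>v\<in>N. solution N f u v = gw f w v (solution N f u) (u v)"
    proof
      fix v assume "v \<in> N"
      have eqf: "(\<lambda>p. if p \<in> Z then w p else solution N f u p) = solution N f u" using h by (auto simp del: solution_def)
      have "solution N f u v = f v (solution N f u) (u v)" by (rule s1(1)[of u, rule_format, OF \<open>v \<in> N\<close>])
      also have "\<dots> = f v (\<lambda>p. if p \<in> Z then w p else solution N f u p) (u v)" by (simp only: eqf)
      also have "\<dots> = gw f w v (solution N f u) (u v)" by (simp only: gw_def)
      finally show "solution N f u v = gw f w v (solution N f u) (u v)" .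
    qed
    from s2(2)[of "solution N f u" u v, OF this vN] show "solution N f u v = solution N (gw f w) u v" .
  qed
  show "\<forall>v\<in>N. solution N (gw f w) u v = solution N f u v" if h: "\<forall>z\<in>Z. solution N (gw f w) u z = w z"
  proof
    fix v assume vN: "v \<in> N"
    have "\<forall>v\<in>N. solution N (gw f w) u v = f v (solution N (gw f w) u) (u v)"
    proof
      fix v assume "v \<in> N"
      have eqf: "(\<lambda>p. if p \<in> Z then w p else solution N (gw f w) u p) = solution N (gw f w) u" using h by (auto simp del: solution_def)
      have "solution N (gw f w) u v = gw f w v (solution N (gw f w) u) (u v)" by (rule s2(1)[of u, rule_format, OF \<open>v \<in> N\<close>])
      also have "\<dots> = f v (\<lambda>p. if p \<in> Z then w p else solution N (gw f w) u p) (u v)" by (simp only: gw_def)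
      also have "\<dots> = f v (solution N (gw f w) u) (u v)" by (simp only: eqf)
      finally show "solution N (gw f w) u v = f v (solution N (gw f w) u) (u v)" .
    qed
    from s1(2)[of "solution N (gw f w) u" u v, OF this vN] show "solution N (gw f w) u v = solution N f u v" .
  qed
qed

end


context setting
begin

lemma CI:
  assumes cp: "compatible N E f"
  shows "measure_pmf.prob (exo_dist N Pu) {u. solution N (do_eq X x f) u Y = y \<and> (\<forall>v\<in>Z. solution N f u v = w v) \<and> solution N f u S = s}
       * measure_pmf.prob (exo_dist N Pu) {u. (\<forall>v\<in>Z. solution N f u v = w v)}
     = measure_pmf.prob (exo_dist N Pu) {u. solution N (do_eq X x f) u Y = y \<and> (\<forall>v\<in>Z. solution N f u v = w v)}
       * measure_pmf.prob (exo_dist N Pu) {u. (\<forall>v\<in>Z. solution N f u v = w v) \<and> solution N f u S = s}"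
proof -
  define cs where "cs u = solution N (gw f w) u" for u
  define ZA where "ZA = {z\<in>Z. cutanc z \<subseteq> K}"
  define ZB where "ZB = {z\<in>Z. cutanc z \<inter> K = {}}"
  define al where "al u = (\<forall>z\<in>ZA. cs u z = w z)" for u
  define be where "be u = (\<forall>z\<in>ZB. cs u z = w z)" for u
  define ay where "ay u = (solution N (do_eq X x f) u Y = y)" for u
  define ps where "ps u = (cs u S = s)" for u
  have ZAB: "Z = ZA \<union> ZB" using Z_split by (auto simp: ZA_def ZB_def)
  have W1: "(\<forall>v\<in>Z. solution N f u v = w v) \<longleftrightarrow> al u \<and> be u" for u
  proof
    assume h: "\<forall>v\<in>Z. solution N f u v = w v"
    have hh: "\<forall>v\<in>N. solution N f u v = cs u v" using ev_equiv(1)[OF cp h] by (simp add: cs_def)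
    have "\<forall>z\<in>Z. cs u z = w z" using h ZN hh by (metis DiffD1 subsetD)
    then show "al u \<and> be u" using ZAB by (auto simp: al_def be_def)
  next
    assume "al u \<and> be u"
    then have h: "\<forall>z\<in>Z. cs u z = w z" using ZAB by (auto simp: al_def be_def)
    have hh: "\<forall>v\<in>N. cs u v = solution N f u v" using ev_equiv(2)[OF cp h[unfolded cs_def]] by (simp add: cs_def)
    show "\<forall>v\<in>Z. solution N f u v = w v" using h ZN hh by (metis DiffD1 subsetD)
  qed
  have S1: "(\<forall>v\<in>Z. solution N f u v = w v) \<Longrightarrow> solution N f u S = cs u S" for u
    using ev_equiv(1)[OF cp] SN by (simp add: cs_def)
  have e1: "{u. solution N (do_eq X x f) u Y = y \<and> (\<forall>v\<in>Z. solution N f u v = w v) \<and> solution N f u S = s}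
     = {u. (ay u \<and> al u) \<and> (be u \<and> ps u)}"
    using W1 S1 by (auto simp: ay_def ps_def)
  have e2: "{u. (\<forall>v\<in>Z. solution N f u v = w v)} = {u. al u \<and> be u}" using W1 by auto
  have e3: "{u. solution N (do_eq X x f) u Y = y \<and> (\<forall>v\<in>Z. solution N f u v = w v)} = {u. (ay u \<and> al u) \<and> be u}"
    using W1 by (auto simp: ay_def)
  have e4: "{u. (\<forall>v\<in>Z. solution N f u v = w v) \<and> solution N f u S = s} = {u. al u \<and> (be u \<and> ps u)}"
    using W1 S1 by (auto simp: ps_def)
  have dal: "al u = al u'" if "\<forall>v\<in>K. u v = u' v" for u u'
  proof -
    have "cs u z = cs u' z" if "z \<in> ZA" for z
    proof -
      have "z \<in> N" "cutanc z \<subseteq> K" using that ZN by (auto simp: ZA_def)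
      then show ?thesis unfolding cs_def using cs_dep[OF cp] \<open>\<forall>v\<in>K. u v = u' v\<close> by blast
    qed
    then show ?thesis by (simp add: al_def)
  qed
  have day: "ay u = ay u'" if "\<forall>v\<in>K. u v = u' v" for u u'
  proof -
    have "\<forall>v\<in>K0. u v = u' v" using that K0_K by blast
    then show ?thesis using cf_dep[OF cp, of u u' x] by (simp add: ay_def)
  qed
  have dbe: "be u = be u'" if "\<forall>v. v \<notin> K \<longrightarrow> u v = u' v" for u u'
  proof -
    have "cs u z = cs u' z" if "z \<in> ZB" for z
    proof -
      have "z \<in> N" "cutanc z \<inter> K = {}" using that ZN by (auto simp: ZB_def)
      then show ?thesis unfolding cs_def using cs_dep[OF cp] \<open>\<forall>v. v \<notin> K \<longrightarrow> u v = u' v\<close> by blast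
    qed
    then show ?thesis by (simp add: be_def)
  qed
  have dps: "ps u = ps u'" if "\<forall>v. v \<notin> K \<longrightarrow> u v = u' v" for u u'
  proof -
    have "cs u S = cs u' S"
      unfolding cs_def using cs_dep[OF cp] that cutanc_S_K SN by blast
    then show ?thesis by (simp add: ps_def)
  qed
  let ?M = "exo_dist N Pu"
  let ?PK = "Pi_pmf K undefined Pu" and ?PB = "Pi_pmf (N - K) undefined Pu"
  have I: "measure_pmf.prob ?M {u. A u \<and> B u} = measure_pmf.prob ?PK {u. A u} * measure_pmf.prob ?PB {u. B u}"
    if "\<And>u u'. \<forall>v\<in>K. u v = u' v \<Longrightarrow> A u = A u'" "\<And>u u'. \<forall>v. v \<notin> K \<longrightarrow> u v = u' v \<Longrightarrow> B u = B u'" for A B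
    unfolding exo_dist_def by (rule indep_Pi[OF finN K_N that])
  have i1: "measure_pmf.prob ?M {u. (ay u \<and> al u) \<and> (be u \<and> ps u)} = measure_pmf.prob ?PK {u. ay u \<and> al u} * measure_pmf.prob ?PB {u. be u \<and> ps u}"
    by (rule I) (metis dal day, metis dbe dps)
  have i2: "measure_pmf.prob ?M {u. al u \<and> be u} = measure_pmf.prob ?PK {u. al u} * measure_pmf.prob ?PB {u. be u}"
    by (rule I) (metis dal, metis dbe)
  have i3: "measure_pmf.prob ?M {u. (ay u \<and> al u) \<and> be u} = measure_pmf.prob ?PK {u. ay u \<and> al u} * measure_pmf.prob ?PB {u. be u}"
    by (rule I) (metis dal day, metis dbe)
  have i4: "measure_pmf.prob ?M {u. al u \<and> (be u \<and> ps u)} = measure_pmf.prob ?PK {u. al u} * measure_pmf.prob ?PB {u. be u \<and> ps u}"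
    by (rule I) (metis dal, metis dbe dps)
  show ?thesis unfolding e1 e2 e3 e4 i1 i2 i3 i4 by (simp only: mult_ac)
qed

end


lemma twin_prob:
  "measure_pmf.prob (twin_dist N Pu f X x) {p. Q (fst p) (snd p)} =
   measure_pmf.prob (exo_dist N Pu) {u. Q (solution N f u) (solution N (do_eq X x f) u)}"
  by (simp add: twin_dist_def vimage_def)

lemma obs_prob:
  "measure_pmf.prob (obs_dist N Pu f) {p. Q p} = measure_pmf.prob (exo_dist N Pu) {u. Q (solution N f u)}"
  by (simp add: obs_dist_def vimage_def)

lemma prob_mono_sets: "(\<And>p. P p \<Longrightarrow> Q p) \<Longrightarrow> measure_pmf.prob M {p. P p} \<le> measure_pmf.prob M {p. Q p}"
  by (rule measure_pmf.finite_measure_mono) auto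

lemma cond_biased:
  fixes s1 :: "'a::finite"
  assumes adm: "admissible N E Z S s1 Pu f" and pz: "P_Z N Pu f Z z > 0"
  shows "P_exp_cond_ZS N Pu f X Y Z S s1 x y z =
         P_biased N Pu f X Y Z S s1 x y z / (\<Sum>y'\<in>UNIV. P_biased N Pu f X Y Z S s1 x y' z)"
proof -
  let ?T = "twin_dist N Pu f X x"
  define c where "c y' = measure_pmf.prob ?T {p. snd p Y = y' \<and> (\<forall>v\<in>Z. fst p v = z v) \<and> fst p S = s1}" for y'
  define e where "e = measure_pmf.prob ?T {p. (\<forall>v\<in>Z. fst p v = z v) \<and> fst p S = s1}"
  define ps where "ps = measure_pmf.prob ?T {p. fst p S = s1}"
  have "P_ZS N Pu f Z S s1 z > 0" using adm pz by (auto simp: admissible_def positive_def)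
  moreover have "P_ZS N Pu f Z S s1 z = e"
    unfolding P_ZS_def e_def obs_prob using twin_prob[where N=N and Pu=Pu and f=f and X=X and x=x and Q="\<lambda>a b. (\<forall>v\<in>Z. a v = z v) \<and> a S = s1"] by simp
  ultimately have epos: "e > 0" by simp
  have esum: "e = (\<Sum>y'\<in>UNIV. c y')"
    unfolding e_def c_def
    by (subst prob_partition[where I = UNIV and g = "\<lambda>p. snd p Y"]) (auto intro!: sum.cong arg_cong[where f = "measure_pmf.prob _"])
  have "e \<le> ps" unfolding e_def ps_def by (rule prob_mono_sets) auto
  then have pspos: "ps > 0" using epos by simp
  have pb: "P_biased N Pu f X Y Z S s1 x y' z = c y' / ps" for y'
    by (simp add: P_biased_def c_def ps_def)
  have "(\<Sum>y'\<in>UNIV. P_biased N Pu f X Y Z S s1 x y' z) = e / ps"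
    unfolding pb esum by (simp add: sum_divide_distrib)
  then have "P_biased N Pu f X Y Z S s1 x y z / (\<Sum>y'\<in>UNIV. P_biased N Pu f X Y Z S s1 x y' z) = c y / e"
    unfolding pb using pspos epos by (simp add: field_simps)
  moreover have "P_exp_cond_ZS N Pu f X Y Z S s1 x y z = c y / e"
    by (simp add: P_exp_cond_ZS_def c_def e_def)
  ultimately show ?thesis by simp
qed

context setting
begin

lemma formula:
  fixes s1 :: "'a::finite" and f :: "'v \<Rightarrow> ('v \<Rightarrow> 'a) \<Rightarrow> 'u \<Rightarrow> 'a"
  assumes adm: "admissible N E Z S s1 Pu f"
  shows "P_exp N Pu f X Y x y =
     (\<Sum>z \<in> PiE Z (\<lambda>_. UNIV). P_exp_cond_ZS N Pu f X Y Z S s1 x y z * P_Z N Pu f Z z)"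
proof -
  have cp: "compatible N E f" using adm by (simp add: admissible_def)
  let ?T = "twin_dist N Pu f X x"
  have finZ: "finite Z" using ZN finN finite_subset by blast
  have finI: "finite (PiE Z (\<lambda>_. UNIV :: 'a set))" using finZ by (simp add: finite_PiE)
  have "P_exp N Pu f X Y x y = (\<Sum>z \<in> PiE Z (\<lambda>_. UNIV). measure_pmf.prob ?T {p. snd p Y = y \<and> restrict (fst p) Z = z})"
    unfolding P_exp_def by (rule prob_partition[OF finI]) auto
  also have "\<dots> = (\<Sum>z \<in> PiE Z (\<lambda>_. UNIV). measure_pmf.prob ?T {p. snd p Y = y \<and> (\<forall>v\<in>Z. fst p v = z v)})"
  proof (rule sum.cong[OF refl])
    fix z assume z: "z \<in> PiE Z (\<lambda>_. UNIV :: 'a set)"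
    have "restrict a Z = z \<longleftrightarrow> (\<forall>v\<in>Z. a v = z v)" for a
      using z by (auto simp: restrict_def PiE_def extensional_def fun_eq_iff)
    then show "measure_pmf.prob ?T {p. snd p Y = y \<and> restrict (fst p) Z = z} =
               measure_pmf.prob ?T {p. snd p Y = y \<and> (\<forall>v\<in>Z. fst p v = z v)}" by simp
  qed
  also have "\<dots> = (\<Sum>z \<in> PiE Z (\<lambda>_. UNIV). P_exp_cond_ZS N Pu f X Y Z S s1 x y z * P_Z N Pu f Z z)"
  proof (rule sum.cong[OF refl])
    fix z :: "'v \<Rightarrow> 'a"
    define a where "a = measure_pmf.prob ?T {p. snd p Y = y \<and> (\<forall>v\<in>Z. fst p v = z v)}"
    define c where "c = measure_pmf.prob ?T {p. snd p Y = y \<and> (\<forall>v\<in>Z. fst p v = z v) \<and> fst p S = s1}"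
    define e where "e = measure_pmf.prob ?T {p. (\<forall>v\<in>Z. fst p v = z v) \<and> fst p S = s1}"
    define d where "d = P_Z N Pu f Z z"
    have ci: "c * d = a * e"
      unfolding a_def c_def e_def d_def P_Z_def obs_prob
      using CI[OF cp, of Pu x y z s1]
      by (simp add: twin_prob[where Q="\<lambda>a b. b Y = y \<and> (\<forall>v\<in>Z. a v = z v) \<and> a S = s1"]
                    twin_prob[where Q="\<lambda>a b. b Y = y \<and> (\<forall>v\<in>Z. a v = z v)"]
                    twin_prob[where Q="\<lambda>a b. (\<forall>v\<in>Z. a v = z v) \<and> a S = s1"])
    have ad: "a \<le> d"
    proof -
      have "a \<le> measure_pmf.prob ?T {p. (\<forall>v\<in>Z. fst p v = z v)}" unfolding a_def by (rule prob_mono_sets) auto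
      also have "\<dots> = d" unfolding d_def P_Z_def obs_prob
        using twin_prob[where N=N and Pu=Pu and f=f and X=X and x=x and Q="\<lambda>a b. (\<forall>v\<in>Z. a v = z v)"] by simp
      finally show ?thesis .
    qed
    have cond: "P_exp_cond_ZS N Pu f X Y Z S s1 x y z = c / e"
      by (simp add: P_exp_cond_ZS_def c_def e_def)
    show "a = P_exp_cond_ZS N Pu f X Y Z S s1 x y z * P_Z N Pu f Z z"
    proof (cases "d > 0")
      case True
      have "P_ZS N Pu f Z S s1 z > 0" using adm True by (auto simp: admissible_def positive_def d_def)
      moreover have "P_ZS N Pu f Z S s1 z = e"
        unfolding P_ZS_def e_def obs_prob using twin_prob[where N=N and Pu=Pu and f=f and X=X and x=x and Q="\<lambda>a b. (\<forall>v\<in>Z. a v = z v) \<and> a S = s1"] by simp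
      ultimately have "e > 0" by simp
      then show ?thesis unfolding cond d_def[symmetric] using ci by (simp add: field_simps)
    next
      case False
      then have "d = 0" using measure_nonneg[of "measure_pmf (obs_dist N Pu f)" "{p. \<forall>v\<in>Z. p v = z v}"] unfolding d_def P_Z_def by linarith
      moreover have "a \<ge> 0" unfolding a_def by simp
      ultimately show ?thesis using ad by (simp add: d_def)
    qed
  qed
  finally show ?thesis .
qed

end

theorem theorem2:
  fixes N :: "'v set" and E :: "('v \<times> 'v) set" and X Y S :: 'v and Z :: "'v set"
    and s1 :: "'a::finite"
  assumes "finite N" and "E \<subseteq> N \<times> N" and "acyclic E"
    and "X \<in> N" and "Y \<in> N" and "S \<in> N" and "X \<noteq> S" and "Y \<noteq> S"
    and "\<forall>v. (S, v) \<notin> E"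
    and "Z \<subseteq> N - {S}"
    and "d_separated (twin_edges N E X) {Cf Y} {Fact S} (Fact ` Z)"
  shows "s_recoverable TYPE('u) N E X Y Z S s1 \<and>
    (\<forall>(Pu :: 'v \<Rightarrow> 'u pmf) f. admissible N E Z S s1 Pu f \<longrightarrow>
       (\<forall>x y. P_exp N Pu f X Y x y =
          (\<Sum>z \<in> PiE Z (\<lambda>_. UNIV). P_exp_cond_ZS N Pu f X Y Z S s1 x y z * P_Z N Pu f Z z)))"
proof -
  interpret setting N E X Y S Z
    by unfold_locales (use assms in auto)
  have F: "\<forall>(Pu :: 'v \<Rightarrow> 'u pmf) f. admissible N E Z S s1 Pu f \<longrightarrow>
       (\<forall>x y. P_exp N Pu f X Y x y =
          (\<Sum>z \<in> PiE Z (\<lambda>_. UNIV). P_exp_cond_ZS N Pu f X Y Z S s1 x y z * P_Z N Pu f Z z))"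
    using formula by blast
  have R: "s_recoverable TYPE('u) N E X Y Z S s1"
    unfolding s_recoverable_def
  proof (intro allI impI)
    fix Pu1 :: "'v \<Rightarrow> 'u pmf" and f1 and Pu2 :: "'v \<Rightarrow> 'u pmf" and f2 and x y
    assume h: "admissible N E Z S s1 Pu1 f1 \<and> admissible N E Z S s1 Pu2 f2 \<and>
        (\<forall>x y z. P_biased N Pu1 f1 X Y Z S s1 x y z = P_biased N Pu2 f2 X Y Z S s1 x y z) \<and>
        (\<forall>z. P_Z N Pu1 f1 Z z = P_Z N Pu2 f2 Z z)"
    have "P_exp N Pu1 f1 X Y x y = (\<Sum>z \<in> PiE Z (\<lambda>_. UNIV). P_exp_cond_ZS N Pu1 f1 X Y Z S s1 x y z * P_Z N Pu1 f1 Z z)"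
      using F h by blast
    also have "\<dots> = (\<Sum>z \<in> PiE Z (\<lambda>_. UNIV). P_exp_cond_ZS N Pu2 f2 X Y Z S s1 x y z * P_Z N Pu2 f2 Z z)"
    proof (rule sum.cong[OF refl])
      fix z :: "'v \<Rightarrow> 'a"
      show "P_exp_cond_ZS N Pu1 f1 X Y Z S s1 x y z * P_Z N Pu1 f1 Z z =
            P_exp_cond_ZS N Pu2 f2 X Y Z S s1 x y z * P_Z N Pu2 f2 Z z"
      proof (cases "P_Z N Pu1 f1 Z z > 0")
        case True
        then have T2: "P_Z N Pu2 f2 Z z > 0" using h by simp
        show ?thesis
          using cond_biased[of N E Z S s1 Pu1 f1 z X Y x y] cond_biased[of N E Z S s1 Pu2 f2 z X Y x y] h True T2
          by simp
      next
        case False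
        then have "P_Z N Pu1 f1 Z z = 0"
          using measure_nonneg[of "measure_pmf (obs_dist N Pu1 f1)" "{w. \<forall>v\<in>Z. w v = z v}"] by (simp add: P_Z_def)
        moreover then have "P_Z N Pu2 f2 Z z = 0" using h by simp
        ultimately show ?thesis by simp
      qed
    qed
    also have "\<dots> = P_exp N Pu2 f2 X Y x y" using F h by metis
    finally show "P_exp N Pu1 f1 X Y x y = P_exp N Pu2 f2 X Y x y" .
  qed
  show ?thesis using R F by blast
qed


end
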